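(* Let $N\ge1$, $M\ge1$, let $L$ be an invertible linear transformation of $\mathbb R^N$ and $u_1,\ldots,u_M\in\mathbb R^N$, and let $$\Lambda:=\bigcup_{j=1}^M L^*\left(u_j+\mathbb Z^N\right)\subset\mathbb R^N.$$ Suppose there exist $M$ points $a_1,\ldots,a_M\in\Lambda$ such that $\Lambda(a_i,a_k)\not\subset\Lambda$ for all $i\ne k$. Then $M$ is the smallest possible number in such a representation: whenever $\Lambda=\bigcup_{j=1}^{M_0}L_0^*\left(\tilde u_j+\mathbb Z^N\right)$ for some invertible linear transformation $L_0$ of $\mathbb R^N$, some integer $M_0\ge1$ and some vectors $\tilde u_1,\ldots,\tilde u_{M_0}\in\mathbb R^N$, we have $M\le M_0$.
   Context: $L^*$ denotes the adjoint of $L$. For two points $a,b\in\mathbb R^N$, $\Lambda(a,b):=\{a+k(b-a): k\in\mathbb Z\}$ is the one-dimensional lattice generated by $a$ and $b$. *)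

theory Defs
  imports "HOL-Analysis.Analysis"
begin

definition int_lattice :: "(real^'n) set" where
  "int_lattice = {z. \<forall>i. z $ i \<in> \<int>}"

text \<open>The set  U_{j=1..M} L^*(u_j + Z^N), with L a matrix and L^* its adjoint (transpose).\<close>
definition union_lattice :: "real^'n^'n \<Rightarrow> nat \<Rightarrow> (nat \<Rightarrow> real^'n) \<Rightarrow> (real^'n) set" where
  "union_lattice L M u = (\<Union>j\<in>{1..M}. (\<lambda>x. transpose L *v x) ` ((\<lambda>z. u j + z) ` int_lattice))"

definition lattice1 :: "real^'n \<Rightarrow> real^'n \<Rightarrow> (real^'n) set" where
  "lattice1 a b = {a + of_int k *\<^sub>R (b - a) | k. True}"

end

theory Submission
  imports Defs
begin

lemma coset_line:
  fixes T :: "real^'n^'n"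
  assumes x: "x = T *v (w + z1)" and y: "y = T *v (w + z2)"
    and z1: "z1 \<in> int_lattice" and z2: "z2 \<in> int_lattice"
  shows "lattice1 x y \<subseteq> (\<lambda>x. T *v x) ` ((\<lambda>z. w + z) ` int_lattice)"
proof
  fix p assume "p \<in> lattice1 x y"
  then obtain k :: int where p: "p = x + of_int k *\<^sub>R (y - x)" unfolding lattice1_def by auto
  define z where "z = z1 + of_int k *\<^sub>R (z2 - z1)"
  have zi: "z \<in> int_lattice" using z1 z2 unfolding int_lattice_def z_def
    by (auto intro!: Ints_add Ints_mult Ints_diff Ints_of_int)
  have lin: "linear (\<lambda>x. T *v x)" by (rule matrix_vector_mul_linear)
  have "p = T *v (w + z)"
    unfolding p x y z_def
    by (simp add: linear_add[OF lin] linear_diff[OF lin] linear_scale[OF lin] algebra_simps)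
  thus "p \<in> (\<lambda>x. T *v x) ` ((\<lambda>z. w + z) ` int_lattice)" using zi by blast
qed

theorem lemma2p4:
  fixes L :: "real^'n^'n" and M :: nat and u :: "nat \<Rightarrow> real^'n" and a :: "nat \<Rightarrow> real^'n"
  assumes "M \<ge> 1"
    and "invertible L"
    and "\<forall>i\<in>{1..M}. a i \<in> union_lattice L M u"
    and "\<forall>i\<in>{1..M}. \<forall>k\<in>{1..M}. i \<noteq> k \<longrightarrow> \<not> lattice1 (a i) (a k) \<subseteq> union_lattice L M u"
  shows "\<forall>(L0 :: real^'n^'n) (M0 :: nat) (v :: nat \<Rightarrow> real^'n).
           invertible L0 \<and> M0 \<ge> 1 \<and> union_lattice L M u = union_lattice L0 M0 v \<longrightarrow> M \<le> M0"
proof (intro allI impI)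
  fix L0 :: "real^'n^'n" and M0 :: nat and v :: "nat \<Rightarrow> real^'n"
  assume h: "invertible L0 \<and> M0 \<ge> 1 \<and> union_lattice L M u = union_lattice L0 M0 v"
  let ?C = "\<lambda>j. (\<lambda>x. transpose L0 *v x) ` ((\<lambda>z. v j + z) ` int_lattice)"
  have "\<forall>i\<in>{1..M}. \<exists>j\<in>{1..M0}. a i \<in> ?C j"
  proof
    fix i assume i: "i \<in> {1..M}"
    have "a i \<in> union_lattice L0 M0 v" using assms(3) h i by auto
    thus "\<exists>j\<in>{1..M0}. a i \<in> ?C j" unfolding union_lattice_def by blast
  qed
  then obtain f where f: "\<And>i. i \<in> {1..M} \<Longrightarrow> f i \<in> {1..M0} \<and> a i \<in> ?C (f i)"
    by metis
  have inj: "inj_on f {1..M}"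
  proof (rule inj_onI, rule ccontr)
    fix i k assume i: "i \<in> {1..M}" and k: "k \<in> {1..M}" and e: "f i = f k" and ne: "i \<noteq> k"
    obtain z1 where z1: "z1 \<in> int_lattice" "a i = transpose L0 *v (v (f i) + z1)" using f[OF i] by auto
    obtain z2 where z2: "z2 \<in> int_lattice" "a k = transpose L0 *v (v (f i) + z2)" using f[OF k] e by auto
    have "lattice1 (a i) (a k) \<subseteq> ?C (f i)" by (rule coset_line[OF z1(2) z2(2) z1(1) z2(1)])
    also have "\<dots> \<subseteq> union_lattice L M u" using h f[OF i] unfolding union_lattice_def by blast
    finally show False using assms(4) i k ne by blast
  qed
  have "card {1..M} \<le> card {1..M0}"
    by (rule card_inj_on_le[OF inj]) (use f in auto)
  thus "M \<le> M0" by simp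
qed

end
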